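(* For any positive integers $q,k,t$ there exists a constant $f(q,k,t)$ such that the following holds. Let $D=(V,A)$ be a Steiner rooted $k$-arc-connected directed graph with root $r$ and a set $S\subseteq V\setminus\{r\}$ of $t$ terminals. Let $\mathcal{C}$ be a family of pairwise vertex-disjoint directed cycles in $D$ with $|\mathcal{C}|\ge f(q,k,t)$ such that every $C\in\mathcal{C}$ is $s$-essential for every $s\in S$. Then there exist $C_1,\ldots,C_q\in\mathcal{C}$ such that for every $s\in S$, either $(C_1,\ldots,C_q)$ or $(C_q,\ldots,C_1)$ is an $s$-ordered sequence of directed cycles.
   Context: Let $D=(V,A)$ be a directed graph with root $r\in V$ and terminal set $S\subseteq V\setminus\{r\}$; it is Steiner rooted $k$-arc-connected if for every $s\in S$ there are $k$ pairwise arc-disjoint directed $r$-$s$ paths. For $s\in S$, a set $U\subseteq V$ is an $s$-cut if $r\in U$ and $s\notin U$; it is a tight $s$-cut if moreover the number of arcs leaving $U$ equals $k$. A set $U$ properly intersects a directed cycle $C$ if $V(C)\cap U\neq\emptyset$ and $V(C)\setminus U\neq\emptyset$. A directed cycle $C$ is $s$-essential if some tight $s$-cut properly intersects $C$. A sequence of directed cycles $(C_1,\ldots,C_q)$ is $s$-ordered if there exist tight $s$-cuts $U_1,\ldots,U_q$ such that $V(C_i)\subseteq U_j$ for all $i<j$, $V(C_i)\cap U_j=\emptyset$ for all $i>j$, and $U_i$ properly intersects $C_i$ for every $i$. *)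

theory Defs
  imports "Graph_Theory.Graph_Theory"
begin

text \<open>Digraphs are finite multi-digraphs in the sense of the AFP entry Graph_Theory
  (fin_digraph).  Directed paths and directed cycles are the library notions
  pre_digraph.apath and pre_digraph.cycle (lists of arcs).\<close>

definition cyc_verts :: "('a,'b) pre_digraph \<Rightarrow> 'b list \<Rightarrow> 'a set" where
  "cyc_verts G C = tail G ` set C"

definition steiner_rooted_k_arc_connected ::
  "('a,'b) pre_digraph \<Rightarrow> 'a \<Rightarrow> 'a set \<Rightarrow> nat \<Rightarrow> bool" where
  "steiner_rooted_k_arc_connected G r S k \<longleftrightarrow>
     (\<forall>s\<in>S. \<exists>P :: nat \<Rightarrow> 'b list.
        (\<forall>i<k. pre_digraph.apath G r (P i) s) \<and>
        (\<forall>i<k. \<forall>j<k. i \<noteq> j \<longrightarrow> set (P i) \<inter> set (P j) = {}))"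

definition out_cut :: "('a,'b) pre_digraph \<Rightarrow> 'a set \<Rightarrow> 'b set" where
  "out_cut G U = {a \<in> arcs G. tail G a \<in> U \<and> head G a \<notin> U}"

definition s_cut :: "('a,'b) pre_digraph \<Rightarrow> 'a \<Rightarrow> 'a \<Rightarrow> 'a set \<Rightarrow> bool" where
  "s_cut G r s U \<longleftrightarrow> U \<subseteq> verts G \<and> r \<in> U \<and> s \<notin> U"

definition tight_s_cut :: "('a,'b) pre_digraph \<Rightarrow> nat \<Rightarrow> 'a \<Rightarrow> 'a \<Rightarrow> 'a set \<Rightarrow> bool" where
  "tight_s_cut G k r s U \<longleftrightarrow> s_cut G r s U \<and> card (out_cut G U) = k"

definition properly_intersects :: "('a,'b) pre_digraph \<Rightarrow> 'a set \<Rightarrow> 'b list \<Rightarrow> bool" where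
  "properly_intersects G U C \<longleftrightarrow>
     cyc_verts G C \<inter> U \<noteq> {} \<and> cyc_verts G C - U \<noteq> {}"

definition s_essential :: "('a,'b) pre_digraph \<Rightarrow> nat \<Rightarrow> 'a \<Rightarrow> 'a \<Rightarrow> 'b list \<Rightarrow> bool" where
  "s_essential G k r s C \<longleftrightarrow> (\<exists>U. tight_s_cut G k r s U \<and> properly_intersects G U C)"

definition s_ordered ::
  "('a,'b) pre_digraph \<Rightarrow> nat \<Rightarrow> 'a \<Rightarrow> 'a \<Rightarrow> nat \<Rightarrow> (nat \<Rightarrow> 'b list) \<Rightarrow> bool" where
  "s_ordered G k r s q Cs \<longleftrightarrow>
     (\<exists>U :: nat \<Rightarrow> 'a set.
        (\<forall>i\<in>{1..q}. tight_s_cut G k r s (U i)) \<and>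
        (\<forall>i\<in>{1..q}. \<forall>j\<in>{1..q}. i < j \<longrightarrow> cyc_verts G (Cs i) \<subseteq> U j) \<and>
        (\<forall>i\<in>{1..q}. \<forall>j\<in>{1..q}. i > j \<longrightarrow> cyc_verts G (Cs i) \<inter> U j = {}) \<and>
        (\<forall>i\<in>{1..q}. properly_intersects G (U i) (Cs i)))"

end

theory Submission
  imports Defs "HOL-Library.Ramsey" "HOL-Library.FuncSet"
begin


context pre_digraph begin

lemma cas_closed:
  assumes "cas u p v" "u \<in> U" "\<forall>a\<in>set p. tail G a \<in> U \<longrightarrow> head G a \<in> U"
  shows "v \<in> U \<and> (\<forall>a\<in>set p. tail G a \<in> U)"
  using assms by (induction p arbitrary: u) auto

lemma cas_closed2:
  assumes "cas u p v" "a \<in> set p" "tail G a \<in> U" "\<forall>a\<in>set p. tail G a \<in> U \<longrightarrow> head G a \<in> U"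
  shows "v \<in> U"
  using assms
proof (induction p arbitrary: u)
  case Nil then show ?case by simp
next
  case (Cons b p)
  show ?case
  proof (cases "a = b")
    case True
    then show ?thesis using Cons.prems cas_closed[of "head G b" p v U] by auto
  next
    case False
    then show ?thesis using Cons by auto
  qed
qed

lemma walk_leaves:
  assumes "awalk u p v" "u \<in> U" "v \<notin> U"
  shows "\<exists>a\<in>set p. a \<in> out_cut G U"
  using assms cas_closed[of u p v U] unfolding awalk_def out_cut_def by blast

lemma cycle_leaves:
  assumes "cycle C" "properly_intersects G U C"
  shows "\<exists>a\<in>set C. a \<in> out_cut G U"
proof (rule ccontr)
  assume na: "\<not> ?thesis"
  obtain u where u: "awalk u C u" using assms(1) unfolding cycle_def by blast
  have cl: "\<forall>a\<in>set C. tail G a \<in> U \<longrightarrow> head G a \<in> U"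
    using na u unfolding out_cut_def awalk_def by blast
  obtain a where a: "a \<in> set C" "tail G a \<in> U"
    using assms(2) unfolding properly_intersects_def cyc_verts_def by blast
  have "u \<in> U" using cas_closed2[OF _ a cl] u unfolding awalk_def by blast
  then have "\<forall>a\<in>set C. tail G a \<in> U" using cas_closed[OF _ _ cl] u unfolding awalk_def by blast
  then show False using assms(2) unfolding properly_intersects_def cyc_verts_def by blast
qed

end

lemma crossing_bound:
  assumes fin: "fin_digraph G" and tight: "card (out_cut G U) = k"
    and cyc: "\<forall>C\<in>D. pre_digraph.cycle G C"
    and disj: "\<forall>C\<in>D. \<forall>C'\<in>D. C \<noteq> C' \<longrightarrow> cyc_verts G C \<inter> cyc_verts G C' = {}"
    and cr: "\<forall>C\<in>D. properly_intersects G U C"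
  shows "card D \<le> k"
proof -
  have "\<forall>C\<in>D. \<exists>a. a \<in> set C \<and> a \<in> out_cut G U"
    using pre_digraph.cycle_leaves cyc cr by blast
  then obtain h where h: "\<forall>C\<in>D. h C \<in> set C \<and> h C \<in> out_cut G U" by metis
  have inj: "inj_on h D"
  proof (rule inj_onI)
    fix C C' assume "C \<in> D" "C' \<in> D" "h C = h C'"
    then have "tail G (h C) \<in> cyc_verts G C \<inter> cyc_verts G C'"
      using h unfolding cyc_verts_def by (metis IntI image_eqI)
    then show "C = C'" using disj \<open>C \<in> D\<close> \<open>C' \<in> D\<close> by blast
  qed
  have "finite (out_cut G U)"
    using fin_digraph.finite_arcs[OF fin] unfolding out_cut_def by simp
  then have "card (h ` D) \<le> k" using h tight by (metis card_mono image_subsetI)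
  then show ?thesis using card_image[OF inj] by simp
qed

lemma cut_lower:
  assumes fin: "fin_digraph G" and sc: "steiner_rooted_k_arc_connected G r S k"
    and s: "s \<in> S" and X: "s_cut G r s X"
  shows "k \<le> card (out_cut G X)"
proof -
  obtain P where P: "\<forall>i<k. pre_digraph.apath G r (P i) s"
      "\<forall>i<k. \<forall>j<k. i \<noteq> j \<longrightarrow> set (P i) \<inter> set (P j) = {}"
    using sc s unfolding steiner_rooted_k_arc_connected_def by blast
  have "\<forall>i<k. \<exists>a. a \<in> set (P i) \<and> a \<in> out_cut G X"
    using P(1) X pre_digraph.walk_leaves unfolding pre_digraph.apath_def s_cut_def by metis
  then obtain h where h: "\<forall>i<k. h i \<in> set (P i) \<and> h i \<in> out_cut G X" by metis
  have inj: "inj_on h {..<k}"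
    using h P(2) unfolding inj_on_def by (metis disjoint_iff lessThan_iff)
  have "finite (out_cut G X)"
    using fin_digraph.finite_arcs[OF fin] unfolding out_cut_def by simp
  then have "card (h ` {..<k}) \<le> card (out_cut G X)" using h by (intro card_mono) auto
  then show ?thesis using card_image[OF inj] by simp
qed

lemma submod:
  assumes fin: "fin_digraph G"
  shows "card (out_cut G (U \<union> W)) + card (out_cut G (U \<inter> W)) \<le> card (out_cut G U) + card (out_cut G W)"
proof -
  have f: "finite (arcs G)" using fin_digraph.finite_arcs[OF fin] .
  have fo: "\<And>X. finite (out_cut G X)" using f unfolding out_cut_def by simp
  have 1: "out_cut G (U \<union> W) \<union> out_cut G (U \<inter> W) \<subseteq> out_cut G U \<union> out_cut G W"
    unfolding out_cut_def by auto
  have 2: "out_cut G (U \<union> W) \<inter> out_cut G (U \<inter> W) \<subseteq> out_cut G U \<inter> out_cut G W"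
    unfolding out_cut_def by auto
  have "card (out_cut G (U \<union> W)) + card (out_cut G (U \<inter> W)) =
     card (out_cut G (U \<union> W) \<union> out_cut G (U \<inter> W)) + card (out_cut G (U \<union> W) \<inter> out_cut G (U \<inter> W))"
    using card_Un_Int fo by blast
  also have "\<dots> \<le> card (out_cut G U \<union> out_cut G W) + card (out_cut G U \<inter> out_cut G W)"
    using 1 2 fo by (intro add_mono card_mono) auto
  also have "\<dots> = card (out_cut G U) + card (out_cut G W)"
    using card_Un_Int fo by metis
  finally show ?thesis .
qed

lemma tight_lattice:
  assumes fin: "fin_digraph G" and sc: "steiner_rooted_k_arc_connected G r S k"
    and s: "s \<in> S" and U: "tight_s_cut G k r s U" and W: "tight_s_cut G k r s W"
  shows "tight_s_cut G k r s (U \<union> W) \<and> tight_s_cut G k r s (U \<inter> W)"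
proof -
  have c1: "s_cut G r s (U \<union> W)" "s_cut G r s (U \<inter> W)"
    using U W unfolding tight_s_cut_def s_cut_def by auto
  have "k \<le> card (out_cut G (U \<union> W))" "k \<le> card (out_cut G (U \<inter> W))"
    using cut_lower[OF fin sc s] c1 by auto
  moreover have "card (out_cut G (U \<union> W)) + card (out_cut G (U \<inter> W)) \<le> k + k"
    using submod[OF fin, of U W] U W unfolding tight_s_cut_def by simp
  ultimately show ?thesis using c1 unfolding tight_s_cut_def by simp
qed

lemma tight_Inter:
  assumes fin: "fin_digraph G" and sc: "steiner_rooted_k_arc_connected G r S k"
    and s: "s \<in> S" and "finite H" "H \<noteq> {}" and "\<forall>i\<in>H. tight_s_cut G k r s (W i)"
  shows "tight_s_cut G k r s (\<Inter>i\<in>H. W i) \<and> tight_s_cut G k r s (\<Union>i\<in>H. W i)"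
  using assms(4-)
proof (induction H rule: finite_ne_induct)
  case (singleton x) then show ?case by simp
next
  case (insert x F)
  then show ?case using tight_lattice[OF fin sc s, of "W x"] by simp
qed



definition rel :: "('a,'b) pre_digraph \<Rightarrow> 'a set \<Rightarrow> 'b list \<Rightarrow> nat" where
  "rel G U C = (if cyc_verts G C \<subseteq> U then 0 else if cyc_verts G C \<inter> U = {} then 1 else 2)"

lemma rel_lt: "rel G U C < 3" unfolding rel_def by auto

lemma no_cross_all:
  assumes fin: "fin_digraph G" and X: "tight_s_cut G k r s X"
    and H: "finite H" "card H \<ge> k + 1" and inj: "inj_on e H"
    and cyc: "\<forall>i\<in>H. pre_digraph.cycle G (e i)"
    and disj: "\<forall>i\<in>H. \<forall>j\<in>H. i \<noteq> j \<longrightarrow> cyc_verts G (e i) \<inter> cyc_verts G (e j) = {}"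
    and cr: "\<forall>j\<in>H. properly_intersects G X (e j)"
  shows False
proof -
  have "card (e ` H) \<le> k"
  proof (rule crossing_bound[OF fin, of X])
    show "card (out_cut G X) = k" using X unfolding tight_s_cut_def by simp
    show "\<forall>C\<in>e ` H. pre_digraph.cycle G C" using cyc by blast
    show "\<forall>C\<in>e ` H. properly_intersects G X C" using cr by blast
    show "\<forall>C\<in>e ` H. \<forall>C'\<in>e ` H. C \<noteq> C' \<longrightarrow> cyc_verts G C \<inter> cyc_verts G C' = {}"
    proof (intro ballI impI)
      fix C C' assume "C \<in> e ` H" "C' \<in> e ` H" "C \<noteq> C'"
      then obtain i j where "i \<in> H" "j \<in> H" "C = e i" "C' = e j" "i \<noteq> j" by blast
      then show "cyc_verts G C \<inter> cyc_verts G C' = {}" using disj by simp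
    qed
  qed
  then show False using card_image[OF inj] H by simp
qed

lemma per_s:
  fixes H :: "nat set"
  assumes fin: "fin_digraph G" and sc: "steiner_rooted_k_arc_connected G r S k" and s: "s \<in> S"
    and H: "finite H" "card H \<ge> k + 1" and inj: "inj_on e H"
    and cyc: "\<forall>i\<in>H. pre_digraph.cycle G (e i)"
    and disj: "\<forall>i\<in>H. \<forall>j\<in>H. i \<noteq> j \<longrightarrow> cyc_verts G (e i) \<inter> cyc_verts G (e j) = {}"
    and W: "\<forall>i\<in>H. tight_s_cut G k r s (W i) \<and> properly_intersects G (W i) (e i)"
    and hom: "\<forall>i\<in>H. \<forall>j\<in>H. i < j \<longrightarrow> rel G (W i) (e j) = a \<and> rel G (W j) (e i) = b"
  shows "(\<forall>i\<in>H. \<forall>j\<in>H. i < j \<longrightarrow> cyc_verts G (e j) \<inter> W i = {} \<and> cyc_verts G (e i) \<subseteq> W j) \<or>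
         (\<forall>i\<in>H. \<forall>j\<in>H. i < j \<longrightarrow> cyc_verts G (e j) \<subseteq> W i \<and> cyc_verts G (e i) \<inter> W j = {})"
proof -
  note nc = no_cross_all[OF fin _ H inj cyc disj]
  have Hne: "H \<noteq> {}" using H by auto
  show ?thesis
  proof (cases "\<exists>i\<in>H. \<exists>j\<in>H. i < j")
    case False then show ?thesis by blast
  next
    case True
    then obtain i j where "i \<in> H" "j \<in> H" "i < j" by blast
    then have "rel G (W i) (e j) = a" "rel G (W j) (e i) = b" using hom by blast+
    then have ab: "a < 3" "b < 3" using rel_lt by (metis, metis)
    have relD: "\<And>U C. rel G U C = 0 \<Longrightarrow> cyc_verts G C \<subseteq> U"
      "\<And>U C. rel G U C = 1 \<Longrightarrow> cyc_verts G C \<inter> U = {}"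
      "\<And>U C. rel G U C = 2 \<Longrightarrow> properly_intersects G U C"
      unfolding rel_def properly_intersects_def by (auto split: if_splits)
    have a2: "a \<noteq> 2"
    proof
      assume a: "a = 2"
      define i0 where "i0 = Min H"
      have i0: "i0 \<in> H" "\<forall>j\<in>H. i0 \<le> j" using H Hne unfolding i0_def by auto
      have "\<forall>j\<in>H. properly_intersects G (W i0) (e j)"
      proof
        fix j assume j: "j \<in> H"
        show "properly_intersects G (W i0) (e j)"
        proof (cases "j = i0")
          case True then show ?thesis using W i0 by simp
        next
          case False then have "i0 < j" using i0 j by force
          then have "rel G (W i0) (e j) = 2" using hom i0 j a by blast
          then show ?thesis by (rule relD(3))
        qed
      qed
      then show False using nc W i0 by blast
    qed
    have b2: "b \<noteq> 2"
    proof
      assume b: "b = 2"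
      define i0 where "i0 = Max H"
      have i0: "i0 \<in> H" "\<forall>j\<in>H. j \<le> i0" using H Hne unfolding i0_def by auto
      have "\<forall>j\<in>H. properly_intersects G (W i0) (e j)"
      proof
        fix j assume j: "j \<in> H"
        show "properly_intersects G (W i0) (e j)"
        proof (cases "j = i0")
          case True then show ?thesis using W i0 by simp
        next
          case False then have "j < i0" using i0 j by force
          then have "rel G (W i0) (e j) = 2" using hom i0 j b by blast
          then show ?thesis by (rule relD(3))
        qed
      qed
      then show False using nc W i0 by blast
    qed
    have n00: "\<not> (a = 0 \<and> b = 0)"
    proof
      assume ab0: "a = 0 \<and> b = 0"
      have sub: "\<forall>i\<in>H. \<forall>j\<in>H. i \<noteq> j \<longrightarrow> cyc_verts G (e j) \<subseteq> W i"
      proof (intro ballI impI)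
        fix i j assume ij: "i \<in> H" "j \<in> H" "i \<noteq> j"
        show "cyc_verts G (e j) \<subseteq> W i"
        proof (cases "i < j")
          case True then have "rel G (W i) (e j) = 0" using hom ij ab0 by blast
          then show ?thesis by (rule relD(1))
        next
          case False then have "j < i" using ij by simp
          then have "rel G (W i) (e j) = 0" using hom ij ab0 by blast
          then show ?thesis by (rule relD(1))
        qed
      qed
      have Wt: "\<forall>i\<in>H. tight_s_cut G k r s (W i)" using W by blast
      have T: "tight_s_cut G k r s (\<Inter>i\<in>H. W i)"
        using conjunct1[OF tight_Inter[OF fin sc s H(1) Hne Wt]] .
      have "\<forall>j\<in>H. properly_intersects G (\<Inter>i\<in>H. W i) (e j)"
      proof
        fix j assume j: "j \<in> H"
        have "cyc_verts G (e j) \<inter> W j \<subseteq> (\<Inter>i\<in>H. W i)"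
        proof
          fix x assume x: "x \<in> cyc_verts G (e j) \<inter> W j"
          show "x \<in> (\<Inter>i\<in>H. W i)"
          proof (rule INT_I)
            fix i assume i: "i \<in> H"
            show "x \<in> W i"
            proof (cases "i = j")
              case True then show ?thesis using x by simp
            next
              case False then have "cyc_verts G (e j) \<subseteq> W i" using sub i j by blast
              then show ?thesis using x by blast
            qed
          qed
        qed
        then have "cyc_verts G (e j) \<inter> (\<Inter>i\<in>H. W i) = cyc_verts G (e j) \<inter> W j"
          using j by blast
        moreover have "cyc_verts G (e j) - (\<Inter>i\<in>H. W i) \<supseteq> cyc_verts G (e j) - W j"
          using j by blast
        moreover have "cyc_verts G (e j) \<inter> W j \<noteq> {}" "cyc_verts G (e j) - W j \<noteq> {}"
          using W j unfolding properly_intersects_def by blast+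
        ultimately show "properly_intersects G (\<Inter>i\<in>H. W i) (e j)"
          unfolding properly_intersects_def by blast
      qed
      then show False using nc T by blast
    qed
    have n11: "\<not> (a = 1 \<and> b = 1)"
    proof
      assume ab0: "a = 1 \<and> b = 1"
      have sub: "\<forall>i\<in>H. \<forall>j\<in>H. i \<noteq> j \<longrightarrow> cyc_verts G (e j) \<inter> W i = {}"
      proof (intro ballI impI)
        fix i j assume ij: "i \<in> H" "j \<in> H" "i \<noteq> j"
        show "cyc_verts G (e j) \<inter> W i = {}"
        proof (cases "i < j")
          case True then have "rel G (W i) (e j) = 1" using hom ij ab0 by blast
          then show ?thesis by (rule relD(2))
        next
          case False then have "j < i" using ij by simp
          then have "rel G (W i) (e j) = 1" using hom ij ab0 by blast
          then show ?thesis by (rule relD(2))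
        qed
      qed
      have Wt: "\<forall>i\<in>H. tight_s_cut G k r s (W i)" using W by blast
      have T: "tight_s_cut G k r s (\<Union>i\<in>H. W i)"
        using conjunct2[OF tight_Inter[OF fin sc s H(1) Hne Wt]] .
      have "\<forall>j\<in>H. properly_intersects G (\<Union>i\<in>H. W i) (e j)"
      proof
        fix j assume j: "j \<in> H"
        have "cyc_verts G (e j) - W j \<subseteq> cyc_verts G (e j) - (\<Union>i\<in>H. W i)"
        proof
          fix x assume x: "x \<in> cyc_verts G (e j) - W j"
          have "\<forall>i\<in>H. x \<notin> W i"
          proof
            fix i assume i: "i \<in> H"
            show "x \<notin> W i"
            proof (cases "i = j")
              case True then show ?thesis using x by simp
            next
              case False then have "cyc_verts G (e j) \<inter> W i = {}" using sub i j by blast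
              then show ?thesis using x by blast
            qed
          qed
          then show "x \<in> cyc_verts G (e j) - (\<Union>i\<in>H. W i)" using x by blast
        qed
        then have "cyc_verts G (e j) - (\<Union>i\<in>H. W i) = cyc_verts G (e j) - W j"
          using j by blast
        moreover have "cyc_verts G (e j) \<inter> (\<Union>i\<in>H. W i) \<supseteq> cyc_verts G (e j) \<inter> W j"
          using j by blast
        moreover have "cyc_verts G (e j) \<inter> W j \<noteq> {}" "cyc_verts G (e j) - W j \<noteq> {}"
          using W j unfolding properly_intersects_def by blast+
        ultimately show "properly_intersects G (\<Union>i\<in>H. W i) (e j)"
          unfolding properly_intersects_def by blast
      qed
      then show False using nc T by blast
    qed
    have "(a = 1 \<and> b = 0) \<or> (a = 0 \<and> b = 1)" using ab a2 b2 n00 n11 by auto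
    then show ?thesis
    proof
      assume ab: "a = 1 \<and> b = 0"
      have "\<forall>i\<in>H. \<forall>j\<in>H. i < j \<longrightarrow> cyc_verts G (e j) \<inter> W i = {} \<and> cyc_verts G (e i) \<subseteq> W j"
      proof (intro ballI impI)
        fix i j assume "i \<in> H" "j \<in> H" "i < j"
        then have "rel G (W i) (e j) = 1" "rel G (W j) (e i) = 0" using hom ab by auto
        then show "cyc_verts G (e j) \<inter> W i = {} \<and> cyc_verts G (e i) \<subseteq> W j" using relD(1,2) by blast
      qed
      then show ?thesis by (rule disjI1)
    next
      assume ab: "a = 0 \<and> b = 1"
      have "\<forall>i\<in>H. \<forall>j\<in>H. i < j \<longrightarrow> cyc_verts G (e j) \<subseteq> W i \<and> cyc_verts G (e i) \<inter> W j = {}"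
      proof (intro ballI impI)
        fix i j assume "i \<in> H" "j \<in> H" "i < j"
        then have "rel G (W i) (e j) = 0" "rel G (W j) (e i) = 1" using hom ab by auto
        then show "cyc_verts G (e j) \<subseteq> W i \<and> cyc_verts G (e i) \<inter> W j = {}" using relD(1,2) by blast
      qed
      then show ?thesis by (rule disjI2)
    qed
  qed
qed



lemma mk_ordered:
  assumes yH: "\<forall>p\<in>{1..q}. tight_s_cut G k r s (W (y p)) \<and> properly_intersects G (W (y p)) (e (y p))"
    and ord: "\<forall>p\<in>{1..q}. \<forall>p'\<in>{1..q}. p < p' \<longrightarrow>
       cyc_verts G (e (y p)) \<subseteq> W (y p') \<and> cyc_verts G (e (y p')) \<inter> W (y p) = {}"
  shows "s_ordered G k r s q (\<lambda>p. e (y p))"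
  unfolding s_ordered_def
proof (intro exI[of _ "\<lambda>p. W (y p)"] conjI)
  show "\<forall>i\<in>{1..q}. \<forall>j\<in>{1..q}. j < i \<longrightarrow> cyc_verts G (e (y i)) \<inter> W (y j) = {}"
    using ord by blast
qed (use yH ord in blast)+

definition fR :: "nat \<Rightarrow> nat \<Rightarrow> nat \<Rightarrow> nat" where
  "fR q k t = (SOME N. partn_lst {..<N} (replicate (9 ^ t) (q + k + 1)) 2) + 1"

lemma fR_spec: "partn_lst {..<fR q k t - 1} (replicate (9 ^ t) (q + k + 1)) 2"
  unfolding fR_def using someI_ex[OF ramsey_full] by simp

theorem proposition2p4:
  "\<exists>f :: nat \<Rightarrow> nat \<Rightarrow> nat \<Rightarrow> nat.
     \<forall>q k t. 0 < q \<and> 0 < k \<and> 0 < t \<longrightarrow>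
     (\<forall>(G :: ('a,'b) pre_digraph) r S (\<C> :: 'b list set).
        fin_digraph G \<and> r \<in> verts G \<and> S \<subseteq> verts G - {r} \<and> card S = t \<and>
        steiner_rooted_k_arc_connected G r S k \<and>
        (\<forall>C\<in>\<C>. pre_digraph.cycle G C) \<and>
        (\<forall>C\<in>\<C>. \<forall>C'\<in>\<C>. C \<noteq> C' \<longrightarrow> cyc_verts G C \<inter> cyc_verts G C' = {}) \<and>
        card \<C> \<ge> f q k t \<and>
        (\<forall>C\<in>\<C>. \<forall>s\<in>S. s_essential G k r s C)
        \<longrightarrow> (\<exists>Cs :: nat \<Rightarrow> 'b list.
               (\<forall>i\<in>{1..q}. Cs i \<in> \<C>) \<and>
               (\<forall>s\<in>S. s_ordered G k r s q Cs \<or>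
                        s_ordered G k r s q (\<lambda>i. Cs (q + 1 - i)))))"
proof (intro exI[of _ fR] allI impI, elim conjE)
  fix q k t :: nat and G :: "('a,'b) pre_digraph" and r S and \<C> :: "'b list set"
  assume q: "0 < q" and k: "0 < k" and t: "0 < t" and fin: "fin_digraph G"
    and S: "card S = t" and sc: "steiner_rooted_k_arc_connected G r S k"
    and cyc: "\<forall>C\<in>\<C>. pre_digraph.cycle G C"
    and disj: "\<forall>C\<in>\<C>. \<forall>C'\<in>\<C>. C \<noteq> C' \<longrightarrow> cyc_verts G C \<inter> cyc_verts G C' = {}"
    and cardC: "card \<C> \<ge> fR q k t"
    and ess: "\<forall>C\<in>\<C>. \<forall>s\<in>S. s_essential G k r s C"
  define m where "m = q + k + 1"
  define n where "n = card \<C>"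
  have finC: "finite \<C>" using cardC unfolding fR_def by (metis card.infinite not_one_le_zero add_is_0 le_zero_eq one_neq_zero)
  have finS: "finite S" using S t by (metis card.infinite less_irrefl)
  have pl: "partn_lst {..<n} (replicate (9 ^ t) m) 2"
    using partn_lst_greater_resource[OF fR_spec[of q k t]] cardC unfolding m_def n_def by simp
  obtain e where e: "bij_betw e {0..<n} \<C>" using ex_bij_betw_nat_finite[OF finC] n_def by blast
  have eC: "\<And>i. i < n \<Longrightarrow> e i \<in> \<C>" using e bij_betwE by fastforce
  have einj: "inj_on e {..<n}" using e bij_betw_imp_inj_on lessThan_atLeast0 by metis
  define Uc where "Uc = (\<lambda>C s. SOME U. tight_s_cut G k r s U \<and> properly_intersects G U C)"
  have Uc: "\<And>C s. C \<in> \<C> \<Longrightarrow> s \<in> S \<Longrightarrow> tight_s_cut G k r s (Uc C s) \<and> properly_intersects G (Uc C s) C"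
  proof -
    fix C s assume "C \<in> \<C>" "s \<in> S"
    then have "\<exists>U. tight_s_cut G k r s U \<and> properly_intersects G U C" using ess unfolding s_essential_def by blast
    then show "tight_s_cut G k r s (Uc C s) \<and> properly_intersects G (Uc C s) C"
      unfolding Uc_def by (rule someI_ex)
  qed
  define Fs where "Fs = PiE S (\<lambda>_. {..<3::nat} \<times> {..<3::nat})"
  have cardFs: "card Fs = 9 ^ t" unfolding Fs_def using card_funcsetE[OF finS, of "{..<3::nat} \<times> {..<3::nat}"] S
    by (simp add: card_cartesian_product)
  have finFs: "finite Fs" unfolding Fs_def using finS by (simp add: finite_PiE)
  obtain idx where idx: "bij_betw idx Fs {0..<(9::nat) ^ t}" using ex_bij_betw_finite_nat[OF finFs] cardFs by metis
  define g where "g = (\<lambda>i j. (\<lambda>s\<in>S. (rel G (Uc (e i) s) (e j), rel G (Uc (e j) s) (e i))))"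
  have gFs: "\<And>i j. g i j \<in> Fs" unfolding g_def Fs_def using rel_lt by auto
  define col where "col = (\<lambda>P. idx (g (Min P) (Max P)))"
  have colF: "col \<in> [{..<n}]\<^bsup>2\<^esup> \<rightarrow> {..<9 ^ t}"
    using gFs idx unfolding col_def by (auto dest: bij_betwE)
  obtain c H where c: "c < length (replicate (9 ^ t) m)"
    and H: "H \<in> nsets {..<n} (replicate (9 ^ t) m ! c)" and hc: "col ` [H]\<^bsup>2\<^esup> \<subseteq> {c}"
    using partn_lstE[OF pl colF] by (metis length_replicate)
  have Hn: "H \<subseteq> {..<n}" "finite H" "card H = m" using H c unfolding nsets_def by auto
  have colij: "\<And>i j. i \<in> H \<Longrightarrow> j \<in> H \<Longrightarrow> i < j \<Longrightarrow> idx (g i j) = c"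
  proof -
    fix i j assume ij: "i \<in> H" "j \<in> H" "i < j"
    then have "{i, j} \<in> [H]\<^bsup>2\<^esup>" by simp
    then have "col {i, j} = c" using hc by blast
    moreover have "Min {i, j} = i" "Max {i, j} = j" using ij by auto
    ultimately show "idx (g i j) = c" unfolding col_def by simp
  qed
  have geq: "\<And>i j i' j'. i \<in> H \<Longrightarrow> j \<in> H \<Longrightarrow> i < j \<Longrightarrow> i' \<in> H \<Longrightarrow> j' \<in> H \<Longrightarrow> i' < j' \<Longrightarrow> g i j = g i' j'"
  proof -
    fix i j i' j' assume "i \<in> H" "j \<in> H" "i < j" "i' \<in> H" "j' \<in> H" "i' < j'"
    then have "idx (g i j) = idx (g i' j')" using colij by simp
    then show "g i j = g i' j'" using idx gFs unfolding bij_betw_def inj_on_def by blast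
  qed
  define xs where "xs = sorted_list_of_set H"
  have xs: "sorted_wrt (<) xs" "set xs = H" "length xs = m"
    unfolding xs_def using Hn by auto
  define x where "x = (\<lambda>p. xs ! (p - 1))"
  have xH: "\<And>p. p \<in> {1..q} \<Longrightarrow> x p \<in> H" unfolding x_def using xs m_def by auto
  have xlt: "\<And>p p'. p \<in> {1..q} \<Longrightarrow> p' \<in> {1..q} \<Longrightarrow> p < p' \<Longrightarrow> x p < x p'"
    unfolding x_def using xs m_def sorted_wrt_nth_less[OF xs(1)] by auto
  have xH2: "xs ! 0 \<in> H" "xs ! 1 \<in> H" "xs ! 0 < xs ! 1"
    using xs m_def k sorted_wrt_nth_less[OF xs(1), of 0 1] by auto
  have HC: "\<And>i. i \<in> H \<Longrightarrow> e i \<in> \<C>" using Hn eC by auto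
  have injH: "inj_on e H" using einj Hn inj_on_subset by blast
  show "\<exists>Cs. (\<forall>i\<in>{1..q}. Cs i \<in> \<C>) \<and>
          (\<forall>s\<in>S. s_ordered G k r s q Cs \<or> s_ordered G k r s q (\<lambda>i. Cs (q + 1 - i)))"
  proof (intro exI[of _ "\<lambda>p. e (x p)"] conjI ballI)
    fix p assume "p \<in> {1..q}" then show "e (x p) \<in> \<C>" using xH HC by blast
  next
    fix s assume s: "s \<in> S"
    define W where "W = (\<lambda>i. Uc (e i) s)"
    define a where "a = fst (g (xs ! 0) (xs ! 1) s)"
    define b where "b = snd (g (xs ! 0) (xs ! 1) s)"
    have hom: "\<forall>i\<in>H. \<forall>j\<in>H. i < j \<longrightarrow> rel G (W i) (e j) = a \<and> rel G (W j) (e i) = b"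
    proof (intro ballI impI)
      fix i j assume ij: "i \<in> H" "j \<in> H" "i < j"
      then have "g i j s = g (xs ! 0) (xs ! 1) s" using geq xH2 by metis
      then show "rel G (W i) (e j) = a \<and> rel G (W j) (e i) = b"
        unfolding a_def b_def W_def using s by (simp add: g_def)
    qed
    have WH: "\<forall>i\<in>H. tight_s_cut G k r s (W i) \<and> properly_intersects G (W i) (e i)"
      unfolding W_def using Uc HC s by blast
    have cycH: "\<forall>i\<in>H. pre_digraph.cycle G (e i)" using cyc HC by blast
    have disjH: "\<forall>i\<in>H. \<forall>j\<in>H. i \<noteq> j \<longrightarrow> cyc_verts G (e i) \<inter> cyc_verts G (e j) = {}"
      using disj HC injH unfolding inj_on_def by metis
    have "card H \<ge> k + 1" using Hn m_def by simp
    note orient = per_s[OF fin sc s Hn(2) this injH cycH disjH WH hom]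
    have yH: "\<And>y. (\<forall>p\<in>{1..q}. y p \<in> H) \<Longrightarrow>
       \<forall>p\<in>{1..q}. tight_s_cut G k r s (W (y p)) \<and> properly_intersects G (W (y p)) (e (y p))"
      using WH by blast
    from orient show "s_ordered G k r s q (\<lambda>p. e (x p)) \<or> s_ordered G k r s q (\<lambda>i. e (x (q + 1 - i)))"
    proof
      assume o1: "\<forall>i\<in>H. \<forall>j\<in>H. i < j \<longrightarrow> cyc_verts G (e j) \<inter> W i = {} \<and> cyc_verts G (e i) \<subseteq> W j"
      have "s_ordered G k r s q (\<lambda>p. e (x p))"
      proof (rule mk_ordered[where W = W])
        show "\<forall>p\<in>{1..q}. tight_s_cut G k r s (W (x p)) \<and> properly_intersects G (W (x p)) (e (x p))"
          using yH xH by blast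
        show "\<forall>p\<in>{1..q}. \<forall>p'\<in>{1..q}. p < p' \<longrightarrow>
           cyc_verts G (e (x p)) \<subseteq> W (x p') \<and> cyc_verts G (e (x p')) \<inter> W (x p) = {}"
          using o1 xH xlt by blast
      qed
      then show ?thesis by blast
    next
      assume o2: "\<forall>i\<in>H. \<forall>j\<in>H. i < j \<longrightarrow> cyc_verts G (e j) \<subseteq> W i \<and> cyc_verts G (e i) \<inter> W j = {}"
      have rv: "\<And>p. p \<in> {1..q} \<Longrightarrow> q + 1 - p \<in> {1..q}" by auto
      have "s_ordered G k r s q (\<lambda>p. e (x (q + 1 - p)))"
      proof (rule mk_ordered[where W = W])
        show "\<forall>p\<in>{1..q}. tight_s_cut G k r s (W (x (q + 1 - p))) \<and> properly_intersects G (W (x (q + 1 - p))) (e (x (q + 1 - p)))"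
          using yH xH rv by blast
        show "\<forall>p\<in>{1..q}. \<forall>p'\<in>{1..q}. p < p' \<longrightarrow>
           cyc_verts G (e (x (q + 1 - p))) \<subseteq> W (x (q + 1 - p')) \<and> cyc_verts G (e (x (q + 1 - p'))) \<inter> W (x (q + 1 - p)) = {}"
        proof (intro ballI impI)
          fix p p' assume pp: "p \<in> {1..q}" "p' \<in> {1..q}" "p < p'"
          then have "x (q + 1 - p') < x (q + 1 - p)" using xlt rv by auto
          then show "cyc_verts G (e (x (q + 1 - p))) \<subseteq> W (x (q + 1 - p')) \<and> cyc_verts G (e (x (q + 1 - p'))) \<inter> W (x (q + 1 - p)) = {}"
            using o2 xH rv pp by blast
        qed
      qed
      then show ?thesis by blast
    qed
  qed
qed

end
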